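(* Let $N\ge 1$ and let $b$ be an atomic program term. For each $m\in\{1,\ldots,N\}$ let $\mathfrak{M}_m$ and $A_m$ be as defined in the context. Then for all $k,m\in\{1,\ldots,N\}$ and every state $x$ of $\mathfrak{M}_k$: $\mathfrak{M}_k,x\models A_m$ if, and only if, $k=m$ and $x=r_m$.
   Context: IPDL formulas are built from propositional variables, $\bot$, $\rightarrow$ and box modalities $[\alpha]$ indexed by program terms built from atomic program terms; $\top=\neg\bot$ and $\langle\alpha\rangle\psi=\neg[\alpha]\neg\psi$. A Kripke model is $(S,\{R_a\}_{a\in AP},V)$ with $S$ a nonempty set, binary relations $R_a$ on $S$ for each atomic program $a$, and valuation $V$; $\mathfrak{M},s\models[a]\psi$ iff $\psi$ holds at every $t$ with $(s,t)\in R_a$, and Boolean connectives are classical. For $m\ge 1$, $\mathfrak{M}_m=(S_m,\{R_a\}_{a\in AP},V_m)$ where $S_m=\{r_m,t^m,s^m_1,\ldots,s^m_m\}$ (distinct states), $R_b$ is the transitive closure of $\{(r_m,t^m),(t^m,t^m),(r_m,s^m_1)\}\cup\{(s^m_i,s^m_{i+1}):1\le i\le m-1\}$, $R_a=\varnothing$ for $a\neq b$, and $V_m(p)=\varnothing$ for every variable $p$. Define $\langle b\rangle^0\psi=\psi$, $\langle b\rangle^{j+1}\psi=\langle b\rangle\langle b\rangle^j\psi$, and $$A_m=\langle b\rangle^m[b]\bot\wedge\neg\langle b\rangle^{m+1}[b]\bot\wedge\langle b\rangle(\langle b\rangle\top\wedge[b]\langle b\rangle\top).$$ *)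

theory Defs
  imports Main
begin

datatype 'a prog =
    Atom 'a
  | Comp "'a prog" "'a prog"
  | Choice "'a prog" "'a prog"
  | Star "'a prog"
  | Inter "'a prog" "'a prog"

datatype ('p, 'a) fm =
    Var 'p
  | Bot
  | Imp "('p, 'a) fm" "('p, 'a) fm"
  | Box "'a prog" "('p, 'a) fm"

definition Neg :: "('p, 'a) fm \<Rightarrow> ('p, 'a) fm" where
  "Neg \<phi> = Imp \<phi> Bot"

definition Top :: "('p, 'a) fm" where
  "Top = Neg Bot"

definition Dia :: "'a prog \<Rightarrow> ('p, 'a) fm \<Rightarrow> ('p, 'a) fm" where
  "Dia \<alpha> \<phi> = Neg (Box \<alpha> (Neg \<phi>))"

definition Conj :: "('p, 'a) fm \<Rightarrow> ('p, 'a) fm \<Rightarrow> ('p, 'a) fm" where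
  "Conj \<phi> \<psi> = Neg (Imp \<phi> (Neg \<psi>))"

record ('s, 'p, 'a) kmodel =
  St :: "'s set"
  Rel :: "'a \<Rightarrow> ('s \<times> 's) set"
  Val :: "'p \<Rightarrow> 's set"

fun prel :: "('s, 'p, 'a) kmodel \<Rightarrow> 'a prog \<Rightarrow> ('s \<times> 's) set" where
  "prel M (Atom a) = Rel M a"
| "prel M (Comp \<alpha> \<beta>) = prel M \<alpha> O prel M \<beta>"
| "prel M (Choice \<alpha> \<beta>) = prel M \<alpha> \<union> prel M \<beta>"
| "prel M (Star \<alpha>) = Id_on (St M) \<union> (prel M \<alpha>)\<^sup>+"
| "prel M (Inter \<alpha> \<beta>) = prel M \<alpha> \<inter> prel M \<beta>"

fun sat :: "('s, 'p, 'a) kmodel \<Rightarrow> 's \<Rightarrow> ('p, 'a) fm \<Rightarrow> bool" where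
  "sat M s (Var p) = (s \<in> Val M p)"
| "sat M s Bot = False"
| "sat M s (Imp \<phi> \<psi>) = (sat M s \<phi> \<longrightarrow> sat M s \<psi>)"
| "sat M s (Box \<alpha> \<phi>) = (\<forall>t. (s, t) \<in> prel M \<alpha> \<longrightarrow> sat M t \<phi>)"

text \<open>States: Rs m = r_m, Ts m = t^m, Ss m i = s^m_i (distinct by construction).\<close>
datatype st = Rs nat | Ts nat | Ss nat nat

definition Mm :: "'a \<Rightarrow> nat \<Rightarrow> (st, 'p, 'a) kmodel" where
  "Mm b m = \<lparr> St = {Rs m, Ts m} \<union> {Ss m i | i. 1 \<le> i \<and> i \<le> m},
             Rel = (\<lambda>a. if a = b then
                        ({(Rs m, Ts m), (Ts m, Ts m), (Rs m, Ss m 1)}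
                         \<union> {(Ss m i, Ss m (i + 1)) | i. 1 \<le> i \<and> i \<le> m - 1})\<^sup>+
                      else {}),
             Val = (\<lambda>p. {}) \<rparr>"

fun dia_pow :: "'a \<Rightarrow> nat \<Rightarrow> ('p, 'a) fm \<Rightarrow> ('p, 'a) fm" where
  "dia_pow b 0 \<psi> = \<psi>"
| "dia_pow b (Suc j) \<psi> = Dia (Atom b) (dia_pow b j \<psi>)"

definition Am :: "'a \<Rightarrow> nat \<Rightarrow> ('p, 'a) fm" where
  "Am b m = Conj (dia_pow b m (Box (Atom b) Bot))
             (Conj (Neg (dia_pow b (m + 1) (Box (Atom b) Bot)))
                   (Dia (Atom b) (Conj (Dia (Atom b) Top) (Box (Atom b) (Dia (Atom b) Top)))))"

end

theory Submission
  imports Defs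
begin

lemma sat_Neg[simp]: "sat M s (Neg \<phi>) = (\<not> sat M s \<phi>)" by (simp add: Neg_def)
lemma sat_Top[simp]: "sat M s Top" by (simp add: Top_def)
lemma sat_Dia[simp]: "sat M s (Dia \<alpha> \<phi>) = (\<exists>t. (s,t) \<in> prel M \<alpha> \<and> sat M t \<phi>)"
  by (simp add: Dia_def)
lemma sat_Conj[simp]: "sat M s (Conj \<phi> \<psi>) = (sat M s \<phi> \<and> sat M s \<psi>)" by (simp add: Conj_def)

definition bse :: "nat \<Rightarrow> (st \<times> st) set" where
  "bse m = {(Rs m, Ts m), (Ts m, Ts m), (Rs m, Ss m 1)}
            \<union> {(Ss m i, Ss m (i + 1)) | i. 1 \<le> i \<and> i \<le> m - 1}"

definition E :: "nat \<Rightarrow> (st \<times> st) set" where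
  "E m = {(Rs m, Ts m), (Ts m, Ts m)} \<union> {(Rs m, Ss m j) | j. 1 \<le> j \<and> j \<le> m}
        \<union> {(Ss m i, Ss m j) | i j. 1 \<le> i \<and> i < j \<and> j \<le> m}"

lemma chain: "1 \<le> i \<Longrightarrow> i < j \<Longrightarrow> j \<le> m \<Longrightarrow> (Ss m i, Ss m j) \<in> (bse m)\<^sup>+"
proof (induction j)
  case 0 then show ?case by simp
next
  case (Suc j)
  have st: "(Ss m j, Ss m (Suc j)) \<in> bse m" using Suc.prems by (auto simp: bse_def)
  show ?case
  proof (cases "i = j")
    case True then show ?thesis using st by auto
  next
    case False
    then have "(Ss m i, Ss m j) \<in> (bse m)\<^sup>+" using Suc by auto
    then show ?thesis using st by (meson trancl.trancl_into_trancl)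
  qed
qed

lemma bse_trancl: assumes m: "1 \<le> m" shows "(bse m)\<^sup>+ = E m"
proof
  show "(bse m)\<^sup>+ \<subseteq> E m"
  proof
    fix p assume "p \<in> (bse m)\<^sup>+"
    then obtain x y where p: "p = (x,y)" and xy: "(x,y) \<in> (bse m)\<^sup>+" by (cases p) auto
    from xy have "(x,y) \<in> E m"
    proof (induction rule: trancl_induct)
      case (base y) then show ?case using \<open>1 \<le> m\<close> by (auto simp: bse_def E_def)
    next
      case (step y z) then show ?case by (auto simp: bse_def E_def)
    qed
    then show "p \<in> E m" using p by simp
  qed
next
  show "E m \<subseteq> (bse m)\<^sup>+"
  proof
    fix p assume "p \<in> E m"
    then consider "p = (Rs m, Ts m)" | "p = (Ts m, Ts m)"
      | j where "p = (Rs m, Ss m j)" "1 \<le> j" "j \<le> m"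
      | i j where "p = (Ss m i, Ss m j)" "1 \<le> i" "i < j" "j \<le> m"
      unfolding E_def by blast
    then show "p \<in> (bse m)\<^sup>+"
    proof cases
      case 3
      have r1: "(Rs m, Ss m 1) \<in> (bse m)\<^sup>+" by (auto simp: bse_def)
      show ?thesis
      proof (cases "j = 1")
        case True then show ?thesis using 3 r1 by simp
      next
        case False
        then have "(Ss m 1, Ss m j) \<in> (bse m)\<^sup>+" using 3 chain by auto
        then show ?thesis using 3 r1 by (meson trancl_trans)
      qed
    next
      case 4 then show ?thesis using chain by simp
    qed (auto simp: bse_def)
  qed
qed

lemma relM: "1 \<le> k \<Longrightarrow> Rel (Mm b k) b = E k"
  using bse_trancl[of k] by (simp add: Mm_def bse_def)

lemma sat_T: "1 \<le> k \<Longrightarrow> \<not> sat (Mm b k :: (st, 'p, 'a) kmodel) (Ts k) (dia_pow b j (Box (Atom b) Bot))"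
  by (induction j) (auto simp: relM E_def)

lemma sat_S: "1 \<le> k \<Longrightarrow> 1 \<le> i \<Longrightarrow> i \<le> k \<Longrightarrow>
   sat (Mm b k :: (st, 'p, 'a) kmodel) (Ss k i) (dia_pow b j (Box (Atom b) Bot)) = ((j = 0 \<and> i = k) \<or> (0 < j \<and> j \<le> k - i))"
proof (induction j arbitrary: i)
  case 0 then show ?case by (auto simp: relM E_def)
next
  case (Suc j)
  have "sat (Mm b k :: (st, 'p, 'a) kmodel) (Ss k i) (dia_pow b (Suc j) (Box (Atom b) Bot)) =
        (\<exists>l. i < l \<and> l \<le> k \<and> sat (Mm b k :: (st, 'p, 'a) kmodel) (Ss k l) (dia_pow b j (Box (Atom b) Bot)))"
    using Suc.prems by (auto simp: relM E_def)
  also have "\<dots> = (\<exists>l. i < l \<and> l \<le> k \<and> ((j = 0 \<and> l = k) \<or> (0 < j \<and> j \<le> k - l)))"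
  proof -
    have eq: "\<And>l. i < l \<Longrightarrow> l \<le> k \<Longrightarrow> sat (Mm b k :: (st, 'p, 'a) kmodel) (Ss k l) (dia_pow b j (Box (Atom b) Bot)) = ((j = 0 \<and> l = k) \<or> (0 < j \<and> j \<le> k - l))"
      using Suc.IH Suc.prems by auto
    show ?thesis by (simp add: eq cong: conj_cong)
  qed
  also have "\<dots> = (Suc j \<le> k - i)"
  proof
    assume "Suc j \<le> k - i"
    then show "\<exists>l. i < l \<and> l \<le> k \<and> ((j = 0 \<and> l = k) \<or> (0 < j \<and> j \<le> k - l))"
    proof (cases "j = 0")
      case True then show ?thesis using \<open>Suc j \<le> k - i\<close> by (intro exI[of _ k]) auto
    next
      case False then show ?thesis using \<open>Suc j \<le> k - i\<close> by (intro exI[of _ "i+1"]) auto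
    qed
  qed auto
  finally show ?case by simp
qed

lemma sat_R: "1 \<le> k \<Longrightarrow>
   sat (Mm b k :: (st, 'p, 'a) kmodel) (Rs k) (dia_pow b (Suc j) (Box (Atom b) Bot)) = (Suc j \<le> k)"
proof -
  assume k: "1 \<le> k"
  have "sat (Mm b k :: (st, 'p, 'a) kmodel) (Rs k) (dia_pow b (Suc j) (Box (Atom b) Bot)) =
        (\<exists>l. 1 \<le> l \<and> l \<le> k \<and> sat (Mm b k :: (st, 'p, 'a) kmodel) (Ss k l) (dia_pow b j (Box (Atom b) Bot)))"
    using k sat_T[OF k, of b j] by (auto simp: relM E_def)
  also have "\<dots> = (\<exists>l. 1 \<le> l \<and> l \<le> k \<and> ((j = 0 \<and> l = k) \<or> (0 < j \<and> j \<le> k - l)))"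
    using sat_S[OF k] by meson
  also have "\<dots> = (Suc j \<le> k)"
  proof
    assume "Suc j \<le> k"
    then show "\<exists>l. 1 \<le> l \<and> l \<le> k \<and> ((j = 0 \<and> l = k) \<or> (0 < j \<and> j \<le> k - l))"
    proof (cases "j = 0")
      case True then show ?thesis using \<open>Suc j \<le> k\<close> by (intro exI[of _ k]) auto
    next
      case False then show ?thesis using \<open>Suc j \<le> k\<close> by (intro exI[of _ 1]) auto
    qed
  qed auto
  finally show ?thesis .
qed

theorem lemma2:
  fixes b :: 'a and N k m :: nat and x :: st
  assumes "N \<ge> 1"
    and "k \<in> {1..N}" and "m \<in> {1..N}"
    and "x \<in> St (Mm b k :: (st, 'p, 'a) kmodel)"
  shows "sat (Mm b k :: (st, 'p, 'a) kmodel) x (Am b m) \<longleftrightarrow> (k = m \<and> x = Rs m)"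
proof -
  have k: "1 \<le> k" and m: "1 \<le> m" using assms by auto
  obtain m' where m': "m = Suc m'" using m by (cases m) auto
  have xs: "x = Rs k \<or> x = Ts k \<or> (\<exists>i. x = Ss k i \<and> 1 \<le> i \<and> i \<le> k)"
    using assms(4) by (auto simp: Mm_def)
  have third: "sat (Mm b k :: (st, 'p, 'a) kmodel) (Rs k)
      (Dia (Atom b) (Conj (Dia (Atom b) Top) (Box (Atom b) (Dia (Atom b) Top))))"
    using k by (auto simp: relM E_def)
  have thirdS: "\<not> sat (Mm b k :: (st, 'p, 'a) kmodel) (Ss k i)
      (Dia (Atom b) (Conj (Dia (Atom b) Top) (Box (Atom b) (Dia (Atom b) Top))))"
    if "1 \<le> i" "i \<le> k" for i
  proof
    assume "sat (Mm b k :: (st, 'p, 'a) kmodel) (Ss k i)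
      (Dia (Atom b) (Conj (Dia (Atom b) Top) (Box (Atom b) (Dia (Atom b) Top))))"
    then obtain y where y: "(Ss k i, y) \<in> E k" "\<forall>t. (y, t) \<in> E k \<longrightarrow> (\<exists>u. (t,u) \<in> E k)"
      "\<exists>t. (y, t) \<in> E k"
      using k by (simp add: relM) blast
    then obtain l where yl: "y = Ss k l" "i < l" "l \<le> k" by (auto simp: E_def)
    then have l: "i < l" "l \<le> k" "\<forall>t. (Ss k l, t) \<in> E k \<longrightarrow> (\<exists>u. (t,u) \<in> E k)"
      using y by auto
    have "l < k" using y yl by (auto simp: E_def)
    then have "(Ss k l, Ss k k) \<in> E k" using l that by (auto simp: E_def)
    then show False using l by (auto simp: E_def)
  qed
  show ?thesis
    using xs
  proof (elim disjE exE conjE)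
    assume x: "x = Rs k"
    show ?thesis unfolding x Am_def m' using sat_R[OF k, of b m'] sat_R[OF k, of b "Suc m'"] third
      by auto
  next
    assume x: "x = Ts k"
    show ?thesis unfolding x Am_def using sat_T[OF k, of b m] by auto
  next
    fix i assume x: "x = Ss k i" and i: "1 \<le> i" "i \<le> k"
    show ?thesis unfolding x Am_def using thirdS[OF i] by auto
  qed
qed

end
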